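(* Let $T$ be a torus and $X$ a finite $T$-CW complex. For each $(q,u)\in\mathbb D^\times\times T_{\mathbb C}$ we have an equality \[ L(S^1\wedge X_+)^{q,u}=S^1\wedge LX^{q,u}_+ \] of subsets of $L(S^1\wedge X_+)$.
   Context: $\mathbb T=U(1)$, $T$ torus, $\check T=\mathrm{Hom}(\mathbb T,T)$, $T_{\mathbb C}=\check T\otimes\mathbb C^\times$, $\mathbb D^\times=\{z\in\mathbb C:0<|z|<1\}$. For a $T$-space $Z$, $LZ=\mathrm{Map}(\mathbb T,Z)$ with $\mathbb T\times T$ acting by $((r,u)\cdot\gamma)(s)=u\cdot\gamma(r^{-1}s)$. For $(q,u)$, $T(q,u)$ is the intersection of all closed subgroups $H\subset\mathbb T\times T$ with $(q,u)\in H_{\mathbb C}=\mathrm{Hom}(\hat H,\mathbb C^\times)\subset\mathbb C^\times\times T_{\mathbb C}$, and $W^{q,u}$ denotes the $T(q,u)$-fixed subspace of a $\mathbb T\times T$-space $W$. $S^1$ has trivial $T$-action, $X_+=X\sqcup\{\mathrm{pt}\}$, and $S^1\wedge LX^{q,u}_+$ is regarded as a subset of $L(S^1\wedge X_+)$ via $[z,\gamma]\mapsto(s\mapsto[z,\gamma(s)])$, the basepoint going to the constant loop at the basepoint. *)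

theory Defs
  imports "HOL-Analysis.Analysis"
begin

definition circle :: "complex set" where
  "circle = sphere 0 1"

(* A torus T of rank r, realised as U(1)^r: coordinates i < r on the unit circle,
   coordinates i \<ge> r frozen to 1. *)
definition torus :: "nat \<Rightarrow> (nat \<Rightarrow> complex) set" where
  "torus r = {u. (\<forall>i<r. cmod (u i) = 1) \<and> (\<forall>i\<ge>r. u i = 1)}"

(* T_\<complex> = Hom(\<T>,T) \<otimes> \<complex>^\<times> = (\<complex>^\<times>)^r, same coordinates. *)
definition torusC :: "nat \<Rightarrow> (nat \<Rightarrow> complex) set" where
  "torusC r = {u. (\<forall>i<r. u i \<noteq> 0) \<and> (\<forall>i\<ge>r. u i = 1)}"

definition tmul :: "(nat \<Rightarrow> complex) \<Rightarrow> (nat \<Rightarrow> complex) \<Rightarrow> nat \<Rightarrow> complex" where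
  "tmul u v = (\<lambda>i. u i * v i)"

definition tone :: "nat \<Rightarrow> complex" where
  "tone = (\<lambda>i. 1)"

definition tinv :: "(nat \<Rightarrow> complex) \<Rightarrow> nat \<Rightarrow> complex" where
  "tinv u = (\<lambda>i. inverse (u i))"

definition closed_subgroup_T :: "nat \<Rightarrow> (nat \<Rightarrow> complex) set \<Rightarrow> bool" where
  "closed_subgroup_T r H \<longleftrightarrow> H \<subseteq> torus r \<and> tone \<in> H \<and>
     (\<forall>a\<in>H. \<forall>b\<in>H. tmul a (tinv b) \<in> H) \<and> closed H"

definition closed_subgroup_TT :: "nat \<Rightarrow> (complex \<times> (nat \<Rightarrow> complex)) set \<Rightarrow> bool" where
  "closed_subgroup_TT r H \<longleftrightarrow> H \<subseteq> circle \<times> torus r \<and> (1, tone) \<in> H \<and>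
     (\<forall>p\<in>H. \<forall>p'\<in>H. (fst p / fst p', tmul (snd p) (tinv (snd p'))) \<in> H) \<and> closed H"

definition chi :: "nat \<Rightarrow> int \<Rightarrow> (nat \<Rightarrow> int) \<Rightarrow> complex \<times> (nat \<Rightarrow> complex) \<Rightarrow> complex" where
  "chi r m k p = fst p powi m * (\<Prod>i<r. snd p i powi k i)"

(* H_\<complex> = Hom(\<hat>H, \<complex>^\<times>) \<subseteq> \<complex>^\<times> \<times> T_\<complex>: the points on which every character of \<T> \<times> T
   that is trivial on H takes the value 1 (\<hat>H = characters of \<T>\<times>T modulo those trivial on H). *)
definition complexify :: "nat \<Rightarrow> (complex \<times> (nat \<Rightarrow> complex)) set \<Rightarrow> (complex \<times> (nat \<Rightarrow> complex)) set" where
  "complexify r H = {(q, u). q \<noteq> 0 \<and> u \<in> torusC r \<and>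
     (\<forall>m k. (\<forall>p\<in>H. chi r m k p = 1) \<longrightarrow> chi r m k (q, u) = 1)}"

definition Tqu :: "nat \<Rightarrow> complex \<Rightarrow> (nat \<Rightarrow> complex) \<Rightarrow> (complex \<times> (nat \<Rightarrow> complex)) set" where
  "Tqu r q u = \<Inter>{H. closed_subgroup_TT r H \<and> (q, u) \<in> complexify r H}"

definition tspace :: "nat \<Rightarrow> 'a topology \<Rightarrow> ((nat \<Rightarrow> complex) \<Rightarrow> 'a \<Rightarrow> 'a) \<Rightarrow> bool" where
  "tspace r X act \<longleftrightarrow>
     continuous_map (prod_topology (top_of_set (torus r)) X) X (\<lambda>(t, x). act t x) \<and>
     (\<forall>x\<in>topspace X. act tone x = x) \<and>
     (\<forall>s\<in>torus r. \<forall>t\<in>torus r. \<forall>x\<in>topspace X. act (tmul s t) x = act s (act t x))"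

definition disk :: "nat \<Rightarrow> (nat \<Rightarrow> real) set" where
  "disk n = {v. (\<forall>i\<ge>n. v i = 0) \<and> (\<Sum>i<n. (v i)\<^sup>2) \<le> 1}"

definition disk_bdry :: "nat \<Rightarrow> (nat \<Rightarrow> real) set" where
  "disk_bdry n = {v \<in> disk n. (\<Sum>i<n. (v i)\<^sup>2) = 1}"

(* Finite T-CW complex: finitely many skeleta sk 0 \<subseteq> ... \<subseteq> sk N = X, where sk k arises from
   sk (k-1) (sk (-1) = {}) by attaching finitely many equivariant cells T/H \<times> D^k, H closed.
   The cell T/H \<times> D^k is encoded by a characteristic map \<Phi> : T \<times> D^k \<rightarrow> sk k which is
   T-equivariant and H-invariant in the T-variable (i.e. factors through T/H \<times> D^k),
   maps T \<times> S^{k-1} into sk (k-1), is injective on T/H \<times> int D^k, the open cells partition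
   sk k - sk (k-1), and sk k carries the quotient (weak) topology. *)
definition finite_TCW :: "nat \<Rightarrow> 'a topology \<Rightarrow> ((nat \<Rightarrow> complex) \<Rightarrow> 'a \<Rightarrow> 'a) \<Rightarrow> bool" where
  "finite_TCW r X act \<longleftrightarrow> tspace r X act \<and>
    (\<exists>(N::nat) (sk :: nat \<Rightarrow> 'a set) (J :: nat \<Rightarrow> nat set)
        (H :: nat \<Rightarrow> nat \<Rightarrow> (nat \<Rightarrow> complex) set)
        (\<Phi> :: nat \<Rightarrow> nat \<Rightarrow> (nat \<Rightarrow> complex) \<times> (nat \<Rightarrow> real) \<Rightarrow> 'a).
      sk N = topspace X \<and>
      (\<forall>k\<le>N. let P = (if k = 0 then {} else sk (k - 1)) in
         finite (J k) \<and> P \<subseteq> sk k \<and> sk k \<subseteq> topspace X \<and>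
         (\<forall>j\<in>J k.
            closed_subgroup_T r (H k j) \<and>
            continuous_map (prod_topology (top_of_set (torus r)) (top_of_set (disk k)))
                           (subtopology X (sk k)) (\<Phi> k j) \<and>
            (\<forall>s\<in>torus r. \<forall>t\<in>torus r. \<forall>d\<in>disk k.
                \<Phi> k j (tmul s t, d) = act s (\<Phi> k j (t, d))) \<and>
            (\<forall>t\<in>torus r. \<forall>h\<in>H k j. \<forall>d\<in>disk k. \<Phi> k j (tmul t h, d) = \<Phi> k j (t, d)) \<and>
            (\<forall>t\<in>torus r. \<forall>d\<in>disk_bdry k. \<Phi> k j (t, d) \<in> P) \<and>
            (\<forall>t\<in>torus r. \<forall>t'\<in>torus r. \<forall>d\<in>disk k - disk_bdry k. \<forall>d'\<in>disk k - disk_bdry k.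
                \<Phi> k j (t, d) = \<Phi> k j (t', d') \<longrightarrow> d = d' \<and> tmul (tinv t') t \<in> H k j)) \<and>
         (\<forall>j\<in>J k. \<forall>j'\<in>J k. j \<noteq> j' \<longrightarrow>
            \<Phi> k j ` (torus r \<times> (disk k - disk_bdry k)) \<inter>
            \<Phi> k j' ` (torus r \<times> (disk k - disk_bdry k)) = {}) \<and>
         sk k - P = (\<Union>j\<in>J k. \<Phi> k j ` (torus r \<times> (disk k - disk_bdry k))) \<and>
         (\<Union>j\<in>J k. \<Phi> k j ` (torus r \<times> (disk k - disk_bdry k))) \<inter> P = {} \<and>
         (\<forall>U. openin (subtopology X (sk k)) U \<longleftrightarrow>
              U \<subseteq> sk k \<and> openin (subtopology X P) (U \<inter> P) \<and>
              (\<forall>j\<in>J k. openin (prod_topology (top_of_set (torus r)) (top_of_set (disk k)))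
                              {p \<in> torus r \<times> disk k. \<Phi> k j p \<in> U}))))"

(* free loop spaces: continuous maps \<T> \<rightarrow> Z (extended by undefined off the circle) *)
definition loop_of :: "(complex \<Rightarrow> 'b) \<Rightarrow> complex \<Rightarrow> 'b" where
  "loop_of f = (\<lambda>s. if s \<in> circle then f s else undefined)"

definition loops :: "'b topology \<Rightarrow> (complex \<Rightarrow> 'b) set" where
  "loops Z = {\<gamma>. continuous_map (top_of_set circle) Z \<gamma> \<and> \<gamma> = loop_of \<gamma>}"

definition loop_act :: "((nat \<Rightarrow> complex) \<Rightarrow> 'b \<Rightarrow> 'b) \<Rightarrow> complex \<times> (nat \<Rightarrow> complex)
                         \<Rightarrow> (complex \<Rightarrow> 'b) \<Rightarrow> complex \<Rightarrow> 'b" where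
  "loop_act act p \<gamma> = loop_of (\<lambda>s. act (snd p) (\<gamma> (inverse (fst p) * s)))"

definition fixed_loops :: "nat \<Rightarrow> 'b topology \<Rightarrow> ((nat \<Rightarrow> complex) \<Rightarrow> 'b \<Rightarrow> 'b)
                            \<Rightarrow> complex \<Rightarrow> (nat \<Rightarrow> complex) \<Rightarrow> (complex \<Rightarrow> 'b) set" where
  "fixed_loops r Z act q u = {\<gamma> \<in> loops Z. \<forall>p\<in>Tqu r q u. loop_act act p \<gamma> = \<gamma>}"

(* X_+ = X \<squnion> {pt}: Some x for x \<in> X, None the disjoint basepoint *)
definition plus_top :: "'a topology \<Rightarrow> 'a option topology" where
  "plus_top X = topology (\<lambda>U. U \<subseteq> insert None (Some ` topspace X) \<and> openin X {x. Some x \<in> U})"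

(* smash product of pointed spaces (A,a0), (B,b0): A \<times> B / (A \<or> B), basepoint None *)
definition smash_carrier :: "'s set \<Rightarrow> 's \<Rightarrow> 'b set \<Rightarrow> 'b \<Rightarrow> ('s \<times> 'b) option set" where
  "smash_carrier A a0 B b0 = insert None (Some ` ((A - {a0}) \<times> (B - {b0})))"

definition smash_proj :: "'s \<Rightarrow> 'b \<Rightarrow> 's \<times> 'b \<Rightarrow> ('s \<times> 'b) option" where
  "smash_proj a0 b0 p = (if fst p = a0 \<or> snd p = b0 then None else Some p)"

definition smash_top :: "'s topology \<Rightarrow> 's \<Rightarrow> 'b topology \<Rightarrow> 'b \<Rightarrow> ('s \<times> 'b) option topology" where
  "smash_top A a0 B b0 = topology (\<lambda>U. U \<subseteq> smash_carrier (topspace A) a0 (topspace B) b0 \<and>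
      openin (prod_topology A B) {p \<in> topspace (prod_topology A B). smash_proj a0 b0 p \<in> U})"

definition smash_plus_act :: "((nat \<Rightarrow> complex) \<Rightarrow> 'a \<Rightarrow> 'a) \<Rightarrow> (nat \<Rightarrow> complex)
        \<Rightarrow> (complex \<times> 'a option) option \<Rightarrow> (complex \<times> 'a option) option" where
  "smash_plus_act act t = map_option (\<lambda>(z, y). (z, map_option (act t) y))"

(* S^1 \<and> (LX^{q,u})_+ \<rightarrow> L(S^1 \<and> X_+), [z,\<gamma>] \<mapsto> (s \<mapsto> [z,\<gamma>(s)]), basepoint \<mapsto> constant loop *)
definition smash_loop_incl :: "(complex \<times> (complex \<Rightarrow> 'a) option) option
        \<Rightarrow> complex \<Rightarrow> (complex \<times> 'a option) option" where
  "smash_loop_incl p = (case p of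
      None \<Rightarrow> loop_of (\<lambda>s. None)
    | Some (z, None) \<Rightarrow> loop_of (\<lambda>s. None)
    | Some (z, Some \<gamma>) \<Rightarrow> loop_of (\<lambda>s. Some (z, Some (\<gamma> s))))"

end

theory Submission
  imports Defs
begin


definition GG :: "nat \<Rightarrow> (complex \<times> (nat \<Rightarrow> complex)) set" where
  "GG r = circle \<times> torus r"

definition gmul :: "complex \<times> (nat \<Rightarrow> complex) \<Rightarrow> complex \<times> (nat \<Rightarrow> complex) \<Rightarrow> complex \<times> (nat \<Rightarrow> complex)" where
  "gmul p p' = (fst p * fst p', tmul (snd p) (snd p'))"

definition ginv :: "complex \<times> (nat \<Rightarrow> complex) \<Rightarrow> complex \<times> (nat \<Rightarrow> complex)" where
  "ginv p = (inverse (fst p), tinv (snd p))"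

type_synonym freq = "int \<times> (nat \<Rightarrow> int)"

definition chf :: "nat \<Rightarrow> freq \<Rightarrow> complex \<times> (nat \<Rightarrow> complex) \<Rightarrow> complex" where
  "chf r l p = chi r (fst l) (snd l) p"

definition tp :: "nat \<Rightarrow> freq set \<Rightarrow> (freq \<Rightarrow> complex) \<Rightarrow> complex \<times> (nat \<Rightarrow> complex) \<Rightarrow> complex" where
  "tp r F c p = (\<Sum>l\<in>F. c l * chf r l p)"

definition fadd :: "freq \<Rightarrow> freq \<Rightarrow> freq" where
  "fadd l l' = (fst l + fst l', \<lambda>i. snd l i + snd l' i)"

definition fneg :: "freq \<Rightarrow> freq" where
  "fneg l = (- fst l, \<lambda>i. - snd l i)"

lemma GG_iff: "p \<in> GG r \<longleftrightarrow> cmod (fst p) = 1 \<and> (\<forall>i<r. cmod (snd p i) = 1) \<and> (\<forall>i\<ge>r. snd p i = 1)"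
  by (cases p) (auto simp: GG_def circle_def torus_def)

lemma GG_nz: "p \<in> GG r \<Longrightarrow> fst p \<noteq> 0"
  by (auto simp: GG_iff)

lemma GG_nz2: "p \<in> GG r \<Longrightarrow> i < r \<Longrightarrow> snd p i \<noteq> 0"
  by (auto simp: GG_iff)

lemma GG_gmul: "p \<in> GG r \<Longrightarrow> p' \<in> GG r \<Longrightarrow> gmul p p' \<in> GG r"
  by (auto simp: GG_iff gmul_def tmul_def norm_mult)

lemma GG_ginv: "p \<in> GG r \<Longrightarrow> ginv p \<in> GG r"
  by (auto simp: GG_iff ginv_def tinv_def norm_inverse)

lemma GG_one: "(1, tone) \<in> GG r"
  by (auto simp: GG_iff tone_def)

lemma chf_gmul: "chf r l (gmul p p') = chf r l p * chf r l p'"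
  by (simp add: chf_def chi_def gmul_def tmul_def power_int_mult_distrib prod.distrib algebra_simps)

lemma chf_fadd: assumes "p \<in> GG r" shows "chf r (fadd l l') p = chf r l p * chf r l' p"
proof -
  have "(\<Prod>i<r. snd p i powi (snd l i + snd l' i)) = (\<Prod>i<r. snd p i powi snd l i * snd p i powi snd l' i)"
    by (rule prod.cong) (use assms GG_nz2 in \<open>auto simp: power_int_add\<close>)
  then show ?thesis using GG_nz[OF assms]
    by (simp add: chf_def chi_def fadd_def power_int_add prod.distrib algebra_simps)
qed

lemma chf_norm: assumes "p \<in> GG r" shows "cmod (chf r l p) = 1"
proof -
  have "cmod (\<Prod>i<r. snd p i powi snd l i) = (\<Prod>i<r. cmod (snd p i) powi snd l i)"
    by (simp add: prod_norm[symmetric] norm_power_int)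
  also have "\<dots> = 1" by (rule prod.neutral) (use assms in \<open>auto simp: GG_iff\<close>)
  finally show ?thesis using assms by (simp add: chf_def chi_def norm_mult norm_power_int GG_iff)
qed

lemma chf_zero: "chf r (0, \<lambda>i. 0) p = 1"
  by (simp add: chf_def chi_def)

lemma chf_one: "chf r l (1, tone) = 1"
  by (simp add: chf_def chi_def tone_def)

lemma chf_fneg: assumes "p \<in> GG r" shows "cnj (chf r l p) = chf r (fneg l) p"
proof -
  let ?w = "chf r l p"
  have "fadd l (fneg l) = (0, \<lambda>i. 0)" by (simp add: fadd_def fneg_def)
  then have 1: "?w * chf r (fneg l) p = 1" using chf_fadd[OF assms, of l "fneg l"] chf_zero by simp
  have 2: "?w * cnj ?w = 1" using chf_norm[OF assms, of l]
    by (metis complex_norm_square mult.commute of_real_1 power_one)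
  have "?w \<noteq> 0" using 1 by auto
  then show ?thesis using 1 2 by (metis mult_left_cancel)
qed

lemma coord_cont: "continuous_on S (\<lambda>x::complex \<times> (nat \<Rightarrow> complex). snd x i)"
  by (rule continuous_on_product_then_coordinatewise[OF continuous_on_snd[OF continuous_on_id]])

lemma chf_cont: "continuous_on (GG r) (chf r l)"
proof -
  have 1: "continuous_on (GG r) (\<lambda>x. fst x powi fst l)"
    by (rule continuous_on_power_int[OF continuous_on_fst[OF continuous_on_id]]) (auto dest: GG_nz)
  have 2: "continuous_on (GG r) (\<lambda>x. \<Prod>i<r. snd x i powi snd l i)"
  proof (rule continuous_on_prod)
    fix i assume "i \<in> {..<r}"
    then show "continuous_on (GG r) (\<lambda>x. snd x i powi snd l i)"
      by (intro continuous_on_power_int[OF coord_cont]) (auto dest: GG_nz2)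
  qed
  show ?thesis unfolding chf_def chi_def by (rule continuous_on_mult[OF 1 2])
qed

lemma tp_cont: "continuous_on (GG r) (tp r F c)"
  unfolding tp_def by (intro continuous_intros chf_cont)

lemma tp_collect:
  assumes "finite I" "p \<in> GG r"
  shows "(\<Sum>i\<in>I. a i * chf r (e i) p) = tp r (e ` I) (\<lambda>l. \<Sum>i\<in>{i\<in>I. e i = l}. a i) p"
proof -
  have "(\<Sum>i\<in>I. a i * chf r (e i) p) = (\<Sum>l\<in>e ` I. \<Sum>i\<in>{i\<in>I. e i = l}. a i * chf r (e i) p)"
    by (rule sum.image_gen[OF assms(1)])
  also have "\<dots> = (\<Sum>l\<in>e ` I. (\<Sum>i\<in>{i\<in>I. e i = l}. a i) * chf r l p)"
    by (rule sum.cong[OF refl]) (simp add: sum_distrib_right)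
  finally show ?thesis by (simp add: tp_def)
qed

definition istp :: "nat \<Rightarrow> (complex \<times> (nat \<Rightarrow> complex) \<Rightarrow> complex) \<Rightarrow> bool" where
  "istp r P \<longleftrightarrow> (\<exists>F c. finite F \<and> (\<forall>p\<in>GG r. P p = tp r F c p))"

lemma istp_gen:
  fixes I :: "'x set"
  assumes "finite I" "\<And>p. p \<in> GG r \<Longrightarrow> P p = (\<Sum>i\<in>I. a i * chf r (e i) p)"
  shows "istp r P"
  unfolding istp_def
  by (rule exI[of _ "e ` I"], rule exI[of _ "\<lambda>l. \<Sum>i\<in>{i\<in>I. e i = l}. a i"])
     (use assms tp_collect in auto)

lemma istp_const: "istp r (\<lambda>p. a)"
  by (rule istp_gen[of "{()}" _ _ "\<lambda>_. a" "\<lambda>_. (0, \<lambda>i. 0)"]) (auto simp: chf_zero)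

lemma istp_chf: "istp r (\<lambda>p. a * chf r l p)"
  by (rule istp_gen[of "{()}" _ _ "\<lambda>_. a" "\<lambda>_. l"]) auto

lemma istp_tp: "finite F \<Longrightarrow> istp r (tp r F c)"
  unfolding istp_def by auto

lemma istp_add:
  assumes "istp r P" "istp r Q" shows "istp r (\<lambda>p. P p + Q p)"
proof -
  obtain F c where F: "finite F" "\<forall>p\<in>GG r. P p = tp r F c p" using assms(1) istp_def by auto
  obtain F' c' where F': "finite F'" "\<forall>p\<in>GG r. Q p = tp r F' c' p" using assms(2) istp_def by auto
  show ?thesis
    by (rule istp_gen[of "F <+> F'" _ _ "case_sum c c'" "case_sum id id"])
       (use F F' in \<open>auto simp: tp_def sum.Plus comp_def\<close>)
qed

lemma istp_mult:
  assumes "istp r P" "istp r Q" shows "istp r (\<lambda>p. P p * Q p)"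
proof -
  obtain F c where F: "finite F" "\<forall>p\<in>GG r. P p = tp r F c p" using assms(1) istp_def by auto
  obtain F' c' where F': "finite F'" "\<forall>p\<in>GG r. Q p = tp r F' c' p" using assms(2) istp_def by auto
  show ?thesis
  proof (rule istp_gen[of "F \<times> F'" _ _ "\<lambda>(l,l'). c l * c' l'" "\<lambda>(l,l'). fadd l l'"])
    fix p assume p: "p \<in> GG r"
    have "P p * Q p = (\<Sum>l\<in>F. \<Sum>l'\<in>F'. (c l * chf r l p) * (c' l' * chf r l' p))"
      using F F' p by (simp add: tp_def sum_product)
    also have "\<dots> = (\<Sum>(l,l')\<in>F \<times> F'. (c l * c' l') * chf r (fadd l l') p)"
      by (simp add: sum.cartesian_product chf_fadd[OF p] algebra_simps)
    finally show "P p * Q p = (\<Sum>i\<in>F \<times> F'. (case i of (l, l') \<Rightarrow> c l * c' l') * chf r (case i of (l, l') \<Rightarrow> fadd l l') p)"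
      by (simp add: case_prod_unfold)
  qed (use F F' in auto)
qed

lemma istp_cnj:
  assumes "istp r P" shows "istp r (\<lambda>p. cnj (P p))"
proof -
  obtain F c where F: "finite F" "\<forall>p\<in>GG r. P p = tp r F c p" using assms(1) istp_def by auto
  show ?thesis
    by (rule istp_gen[of F _ _ "\<lambda>l. cnj (c l)" fneg])
       (use F in \<open>auto simp: tp_def chf_fneg\<close>)
qed



lemma T: "torus r = PiE UNIV (\<lambda>i. if i < r then sphere (0::complex) 1 else {1})"
proof (rule set_eqI)
  fix u :: "nat \<Rightarrow> complex"
  have "u \<in> torus r \<longleftrightarrow> (\<forall>i. u i \<in> (if i < r then sphere (0::complex) 1 else {1}))"
    unfolding torus_def mem_Collect_eq 
  proof safe
    fix i assume "\<forall>i<r. cmod (u i) = 1" "\<forall>i\<ge>r. u i = 1" then show "u i \<in> (if i < r then sphere 0 1 else {1})"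
      by (cases "i < r") auto
  next
    fix i assume "\<forall>i. u i \<in> (if i < r then sphere 0 1 else {1})" "i < r" then show "cmod (u i) = 1"
      by (metis mem_sphere_0)
  next
    fix i assume "\<forall>i. u i \<in> (if i < r then sphere 0 1 else {1})" "r \<le> i" then show "u i = 1"
      by (metis not_le singletonD)
  qed
  then show "u \<in> torus r \<longleftrightarrow> u \<in> PiE UNIV (\<lambda>i. if i < r then sphere (0::complex) 1 else {1})"
    unfolding PiE_UNIV_domain Pi_iff by simp
qed

lemma compact_GG: "compact (GG r)"
proof -
  have "compactin (product_topology (\<lambda>i. euclidean) UNIV) (PiE UNIV (\<lambda>i. if i < r then sphere (0::complex) 1 else {1}))"
    by (subst compactin_PiE) (auto simp: compactin_euclidean_iff)
  then have "compact (torus r)" by (simp add: T euclidean_product_topology compactin_euclidean_iff)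
  then show ?thesis unfolding GG_def circle_def by (intro compact_Times compact_sphere)
qed

definition RR :: "nat \<Rightarrow> (complex \<times> (nat \<Rightarrow> complex) \<Rightarrow> real) set" where
  "RR r = {f. \<exists>P. istp r P \<and> (\<forall>p\<in>GG r. f p = Re (P p))}"

lemma chf_fst: "chf r (1, \<lambda>j. 0) p = fst p"
  by (simp add: chf_def chi_def)

lemma chf_coord: assumes "i < r" shows "chf r (0, \<lambda>j. if j = i then 1 else 0) p = snd p i"
proof -
  have "(\<Prod>j<r. snd p j powi (if j = i then 1 else 0)) = (\<Prod>j<r. if j = i then snd p j else 1)"
    by (rule prod.cong) auto
  also have "\<dots> = snd p i" using assms by (subst prod.delta) auto
  finally show ?thesis by (simp add: chf_def chi_def)
qed

lemma sep_complex: assumes "z \<noteq> (w::complex)" shows "\<exists>a\<in>{1, -\<i>}. Re (a*z) \<noteq> Re (a*w)"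
  using assms complex_eqI by force

lemma RR_cont: "f \<in> RR r \<Longrightarrow> continuous_on (GG r) f"
proof -
  assume "f \<in> RR r"
  then obtain P where P: "istp r P" "\<forall>p\<in>GG r. f p = Re (P p)" by (auto simp: RR_def)
  then obtain F c where F: "finite F" "\<forall>p\<in>GG r. P p = tp r F c p" by (auto simp: istp_def)
  have "continuous_on (GG r) (\<lambda>p. Re (tp r F c p))"
    by (intro continuous_on_Re tp_cont)
  then show ?thesis by (rule continuous_on_cong[THEN iffD1, rotated 2]) (use P F in auto)
qed

lemma SW:
  assumes "continuous_on (GG r) f" "e > 0"
  shows "\<exists>F c. finite F \<and> (\<forall>p\<in>GG r. \<bar>f p - Re (tp r F c p)\<bar> < e)"
proof -
  have "\<exists>g. g \<in> RR r \<and> (\<forall>x\<in>GG r. \<bar>f x - g x\<bar> < e)"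
  proof (rule Stone_Weierstrass_HOL[where P="\<lambda>g. g \<in> RR r"])
    show "compact (GG r)" by (rule compact_GG)
    show "(\<lambda>x. c) \<in> RR r" for c
      unfolding RR_def by (rule CollectI, rule exI[of _ "\<lambda>p. complex_of_real c"]) (simp add: istp_const)
    show "continuous_on (GG r) g" if "g \<in> RR r" for g using RR_cont that by blast
    show "(\<lambda>x. g x + h x) \<in> RR r" if gh: "g \<in> RR r \<and> h \<in> RR r" for g h
    proof -
      obtain P where P: "istp r P" "\<forall>p\<in>GG r. g p = Re (P p)" using gh unfolding RR_def by blast
      obtain Q where Q: "istp r Q" "\<forall>p\<in>GG r. h p = Re (Q p)" using gh unfolding RR_def by blast
      show ?thesis unfolding RR_def
        by (rule CollectI, rule exI[of _ "\<lambda>p. P p + Q p"]) (use P Q istp_add in auto)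
    qed
    show "(\<lambda>x. g x * h x) \<in> RR r" if gh: "g \<in> RR r \<and> h \<in> RR r" for g h
    proof -
      obtain P where P: "istp r P" "\<forall>p\<in>GG r. g p = Re (P p)" using gh unfolding RR_def by blast
      obtain Q where Q: "istp r Q" "\<forall>p\<in>GG r. h p = Re (Q p)" using gh unfolding RR_def by blast
      have i: "istp r (\<lambda>p. P p * ((Q p + cnj (Q p)) * (1/2)))"
        by (intro istp_mult istp_add istp_cnj istp_const P Q)
      have e: "Re (P p * ((Q p + cnj (Q p)) * (1/2))) = Re (P p) * Re (Q p)" for p
        by (simp add: algebra_simps add_divide_distrib[symmetric])
      show ?thesis unfolding RR_def
        by (rule CollectI, rule exI[of _ "\<lambda>p. P p * ((Q p + cnj (Q p)) * (1/2))"]) (use P Q i e in auto)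
    qed
    show "\<exists>g. g \<in> RR r \<and> g x \<noteq> g y" if "x \<in> GG r \<and> y \<in> GG r \<and> x \<noteq> y" for x y
    proof (cases "fst x = fst y")
      case False
      then obtain a where "Re (a * fst x) \<noteq> Re (a * fst y)" using sep_complex by blast
      moreover have "(\<lambda>p. Re (a * chf r (1, \<lambda>j. 0) p)) \<in> RR r"
        unfolding RR_def using istp_chf by blast
      ultimately show ?thesis by (metis chf_fst)
    next
      case True
      then have "snd x \<noteq> snd y" using that by (metis prod.expand)
      then obtain i where i: "snd x i \<noteq> snd y i" by auto
      then have ir: "i < r" using that by (metis GG_iff not_le)
      then obtain a where "Re (a * snd x i) \<noteq> Re (a * snd y i)" using sep_complex i by blast
      moreover have "(\<lambda>p. Re (a * chf r (0, \<lambda>j. if j = i then 1 else 0) p)) \<in> RR r"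
        unfolding RR_def using istp_chf by blast
      ultimately show ?thesis using chf_coord[OF ir] by metis
    qed
  qed (use assms in auto)
  then obtain g where g: "g \<in> RR r" "\<forall>x\<in>GG r. \<bar>f x - g x\<bar> < e" by blast
  then obtain P where P: "istp r P" "\<forall>p\<in>GG r. g p = Re (P p)" by (auto simp: RR_def)
  then obtain F c where F: "finite F" "\<forall>p\<in>GG r. P p = tp r F c p" by (auto simp: istp_def)
  show ?thesis using g P F by (intro exI[of _ F] exI[of _ c]) auto
qed

lemma tendsto_fun_coord:
  fixes f :: "'x \<Rightarrow> 'i \<Rightarrow> 'b::topological_space"
  assumes "\<And>i. ((\<lambda>n. f n i) \<longlongrightarrow> g i) F"
  shows "(f \<longlongrightarrow> g) F"
proof (rule topological_tendstoI)
  fix S assume S: "open S" "g \<in> S"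
  then have "openin (product_topology (\<lambda>i. euclidean) UNIV) S" by (simp add: open_fun_def)
  then obtain U where U: "finite {i. U i \<noteq> UNIV}" "\<And>i. open (U i)" "g \<in> PiE UNIV U" "PiE UNIV U \<subseteq> S"
    using S(2) unfolding openin_product_topology_alt by force
  have "eventually (\<lambda>n. \<forall>i\<in>{i. U i \<noteq> UNIV}. f n i \<in> U i) F"
  proof (rule eventually_ball_finite[OF U(1)], rule ballI)
    fix i assume "i \<in> {i. U i \<noteq> UNIV}"
    have "g i \<in> U i" using U(3) by (auto simp: PiE_iff)
    then show "eventually (\<lambda>n. f n i \<in> U i) F"
      using topological_tendstoD[OF assms[of i] U(2)[of i]] by blast
  qed
  then show "eventually (\<lambda>n. f n \<in> S) F"
  proof (rule eventually_mono)
    fix n assume "\<forall>i\<in>{i. U i \<noteq> UNIV}. f n i \<in> U i"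
    then have "f n \<in> PiE UNIV U" by (auto simp: PiE_iff)
    then show "f n \<in> S" using U(4) by blast
  qed
qed



lemma csg_sub: "closed_subgroup_TT r H \<Longrightarrow> H \<subseteq> GG r"
  by (simp add: closed_subgroup_TT_def GG_def)

lemma csg_one: "closed_subgroup_TT r H \<Longrightarrow> (1, tone) \<in> H"
  by (simp add: closed_subgroup_TT_def)

lemma csg_closed: "closed_subgroup_TT r H \<Longrightarrow> closed H"
  by (simp add: closed_subgroup_TT_def)

lemma csg_inv: assumes "closed_subgroup_TT r H" "g \<in> H" shows "ginv g \<in> H"
proof -
  have ax: "\<forall>p\<in>H. \<forall>p'\<in>H. (fst p / fst p', tmul (snd p) (tinv (snd p'))) \<in> H"
    using assms(1) unfolding closed_subgroup_TT_def by blast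
  have "(fst (1::complex, tone) / fst g, tmul (snd (1::complex, tone)) (tinv (snd g))) \<in> H"
    using ax csg_one[OF assms(1)] assms(2) by blast
  moreover have "(fst (1::complex, tone) / fst g, tmul (snd (1::complex, tone)) (tinv (snd g))) = ginv g"
    by (simp add: ginv_def tmul_def tone_def tinv_def divide_inverse)
  ultimately show ?thesis by simp
qed

lemma csg_mul: assumes "closed_subgroup_TT r H" "g \<in> H" "h \<in> H" shows "gmul h g \<in> H"
proof -
  have ax: "\<forall>p\<in>H. \<forall>p'\<in>H. (fst p / fst p', tmul (snd p) (tinv (snd p'))) \<in> H"
    using assms(1) unfolding closed_subgroup_TT_def by blast
  have "(fst h / fst (ginv g), tmul (snd h) (tinv (snd (ginv g)))) \<in> H"
    using ax csg_inv[OF assms(1,2)] assms(3) by blast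
  moreover have "(fst h / fst (ginv g), tmul (snd h) (tinv (snd (ginv g)))) = gmul h g"
    by (simp add: ginv_def tmul_def tinv_def gmul_def divide_inverse)
  ultimately show ?thesis by simp
qed

definition gpow :: "complex \<times> (nat \<Rightarrow> complex) \<Rightarrow> nat \<Rightarrow> complex \<times> (nat \<Rightarrow> complex)" where
  "gpow h j = (fst h ^ j, \<lambda>i. snd h i ^ j)"

lemma gpow_0: "gpow h 0 = (1, tone)"
  by (simp add: gpow_def tone_def)

lemma gpow_Suc: "gpow h (Suc j) = gmul h (gpow h j)"
  by (simp add: gpow_def gmul_def tmul_def)

lemma csg_pow: assumes "closed_subgroup_TT r H" "h \<in> H" shows "gpow h j \<in> H"
proof (induction j)
  case 0 then show ?case using csg_one[OF assms(1)] by (simp add: gpow_0)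
next
  case (Suc j) then show ?case using csg_mul[OF assms(1) Suc assms(2)] by (simp add: gpow_Suc)
qed

lemma chf_gpow: "chf r l (gpow h j) = chf r l h ^ j"
  by (induction j) (simp_all add: gpow_0 gpow_Suc chf_one chf_gmul)

definition dd :: "nat \<Rightarrow> complex \<times> (nat \<Rightarrow> complex) \<Rightarrow> complex \<times> (nat \<Rightarrow> complex) \<Rightarrow> real" where
  "dd r y h = cmod (fst y - fst h) + (\<Sum>i<r. cmod (snd y i - snd h i))"

definition fH :: "nat \<Rightarrow> (complex \<times> (nat \<Rightarrow> complex)) set \<Rightarrow> complex \<times> (nat \<Rightarrow> complex) \<Rightarrow> real" where
  "fH r H y = Inf (dd r y ` H)"

lemma dd_nonneg: "0 \<le> dd r y h"
  by (simp add: dd_def sum_nonneg)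

lemma dd_self: "dd r y y = 0"
  by (simp add: dd_def)

lemma dd_sym: "dd r y h = dd r h y"
  by (simp add: dd_def norm_minus_commute)

lemma ntri: "cmod (a - c) \<le> cmod (a - b) + cmod (b - c)"
proof -
  have "a - c = (a - b) + (b - c)" by simp
  then show ?thesis by (metis norm_triangle_ineq)
qed

lemma dd_tri: "dd r y h \<le> dd r y z + dd r z h"
proof -
  have "cmod (fst y - fst h) \<le> cmod (fst y - fst z) + cmod (fst z - fst h)"
    by (rule ntri)
  moreover have "(\<Sum>i<r. cmod (snd y i - snd h i)) \<le> (\<Sum>i<r. cmod (snd y i - snd z i) + cmod (snd z i - snd h i))"
    by (rule sum_mono) (rule ntri)
  ultimately show ?thesis by (simp add: dd_def sum.distrib)
qed

lemma dd_gmul: assumes "g \<in> GG r" shows "dd r (gmul y g) (gmul h g) = dd r y h"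
proof -
  have 1: "cmod (fst y * fst g - fst h * fst g) = cmod (fst y - fst h)"
    using assms by (simp add: left_diff_distrib[symmetric] norm_mult GG_iff)
  have 2: "(\<Sum>i<r. cmod (snd y i * snd g i - snd h i * snd g i)) = (\<Sum>i<r. cmod (snd y i - snd h i))"
    by (rule sum.cong) (use assms in \<open>auto simp: left_diff_distrib[symmetric] norm_mult GG_iff\<close>)
  show ?thesis using 1 2 by (simp add: dd_def gmul_def tmul_def)
qed

lemma bdd_dd: "bdd_below (dd r y ` H)"
  by (rule bdd_belowI[of _ 0]) (auto simp: dd_nonneg)

lemma fH_le: "h \<in> H \<Longrightarrow> fH r H y \<le> dd r y h"
  unfolding fH_def by (rule cInf_lower) (auto simp: bdd_dd)

lemma fH_ge: "H \<noteq> {} \<Longrightarrow> (\<And>h. h \<in> H \<Longrightarrow> a \<le> dd r y h) \<Longrightarrow> a \<le> fH r H y"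
  unfolding fH_def by (rule cInf_greatest) auto

lemma fH_nonneg: "H \<noteq> {} \<Longrightarrow> 0 \<le> fH r H y"
  by (rule fH_ge) (auto simp: dd_nonneg)

lemma fH_zero: "h \<in> H \<Longrightarrow> fH r H h = 0"
  using fH_le[of h H r h] fH_nonneg[of H r h] by (auto simp: dd_self)

lemma fH_lip: assumes "H \<noteq> {}" shows "fH r H y \<le> dd r y z + fH r H z"
proof -
  have "fH r H y - dd r y z \<le> fH r H z"
  proof (rule fH_ge[OF assms])
    fix h assume "h \<in> H"
    then have "fH r H y \<le> dd r y h" by (rule fH_le)
    also have "\<dots> \<le> dd r y z + dd r z h" by (rule dd_tri)
    finally show "fH r H y - dd r y z \<le> dd r z h" by simp
  qed
  then show ?thesis by simp
qed

lemma dd_cont: "continuous_on UNIV (\<lambda>y. dd r y x)"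
  unfolding dd_def
proof (intro continuous_on_add continuous_on_norm continuous_on_diff continuous_on_sum continuous_on_const
       continuous_on_fst continuous_on_id)
  show "continuous_on UNIV (\<lambda>y::complex \<times> (nat \<Rightarrow> complex). snd y i)" for i by (rule coord_cont)
qed

lemma fH_cont: assumes "H \<noteq> {}" shows "continuous_on S (fH r H)"
  unfolding continuous_on_def
proof (intro ballI)
  fix x assume "x \<in> S"
  have "((\<lambda>y. dd r y x) \<longlongrightarrow> dd r x x) (at x within S)"
    using dd_cont[of r x] unfolding continuous_on_def by (meson UNIV_I tendsto_within_subset subset_UNIV)
  then have d0: "((\<lambda>y. dd r y x) \<longlongrightarrow> 0) (at x within S)" by (simp add: dd_self)
  have "((\<lambda>y. fH r H y - fH r H x) \<longlongrightarrow> 0) (at x within S)"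
  proof (rule Lim_null_comparison[OF _ d0])
    show "\<forall>\<^sub>F y in at x within S. norm (fH r H y - fH r H x) \<le> dd r y x"
    proof (rule always_eventually, rule allI)
      fix y
      have "fH r H y \<le> dd r y x + fH r H x" by (rule fH_lip[OF assms])
      moreover have "fH r H x \<le> dd r x y + fH r H y" by (rule fH_lip[OF assms])
      ultimately show "norm (fH r H y - fH r H x) \<le> dd r y x" by (simp add: dd_sym[of r x y] abs_le_iff)
    qed
  qed
  then show "(fH r H \<longlongrightarrow> fH r H x) (at x within S)" by (rule LIM_zero_cancel)
qed

lemma gmul_ginv_cancel: assumes "g \<in> GG r" shows "gmul (gmul y g) (ginv g) = y"
proof -
  have "snd y i * snd g i * inverse (snd g i) = snd y i" for i
  proof (cases "i < r")
    case True then show ?thesis using GG_nz2[OF assms True] by simp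
  next
    case False then show ?thesis using assms by (simp add: GG_iff)
  qed
  then have 1: "(\<lambda>i. snd y i * snd g i * inverse (snd g i)) = snd y" by (rule ext)
  have 2: "fst y * fst g * inverse (fst g) = fst y" using GG_nz[OF assms] by simp
  show ?thesis unfolding gmul_def ginv_def tmul_def tinv_def using 1 2 by (simp add: prod_eq_iff)
qed

lemma fH_inv1: assumes "closed_subgroup_TT r H" "g \<in> H" shows "fH r H (gmul y g) \<le> fH r H y"
proof (rule fH_ge)
  show "H \<noteq> {}" using csg_one[OF assms(1)] by blast
  fix h assume "h \<in> H"
  then have "gmul h g \<in> H" using csg_mul assms by blast
  then have "fH r H (gmul y g) \<le> dd r (gmul y g) (gmul h g)" by (rule fH_le)
  also have "\<dots> = dd r y h" using dd_gmul csg_sub[OF assms(1)] assms(2) by blast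
  finally show "fH r H (gmul y g) \<le> dd r y h" .
qed

lemma fH_inv: assumes "closed_subgroup_TT r H" "g \<in> H" shows "fH r H (gmul y g) = fH r H y"
proof -
  have gG: "g \<in> GG r" using csg_sub[OF assms(1)] assms(2) by blast
  have "fH r H (gmul (gmul y g) (ginv g)) \<le> fH r H (gmul y g)"
    by (rule fH_inv1[OF assms(1) csg_inv[OF assms]])
  then have "fH r H y \<le> fH r H (gmul y g)" using gmul_ginv_cancel[OF gG] by simp
  then show ?thesis using fH_inv1[OF assms, of y] by linarith
qed

lemma fH_pos:
  assumes "closed_subgroup_TT r H" "x \<in> GG r" "x \<notin> H"
  shows "fH r H x > 0"
proof (rule ccontr)
  assume "\<not> fH r H x > 0"
  have ne: "H \<noteq> {}" using csg_one[OF assms(1)] by blast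
  then have "fH r H x = 0" using fH_nonneg[OF ne, of r x] \<open>\<not> fH r H x > 0\<close> by simp
  have "\<exists>h\<in>H. dd r x h < inverse (real (Suc n))" for n
  proof -
    have "Inf (dd r x ` H) < inverse (real (Suc n))" using \<open>fH r H x = 0\<close> by (simp add: fH_def)
    then show ?thesis using ne bdd_dd by (subst (asm) cInf_less_iff) auto
  qed
  then obtain hs where hs: "\<And>n. hs n \<in> H" "\<And>n. dd r x (hs n) < inverse (real (Suc n))" by metis
  have hsG: "hs n \<in> GG r" for n using hs(1) csg_sub[OF assms(1)] by blast
  have lim0: "(\<lambda>n. inverse (real (Suc n))) \<longlonglongrightarrow> 0" by (rule LIMSEQ_inverse_real_of_nat)
  have c1: "(\<lambda>n. fst (hs n)) \<longlonglongrightarrow> fst x"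
  proof -
    have "(\<lambda>n. fst (hs n) - fst x) \<longlonglongrightarrow> 0"
    proof (rule Lim_null_comparison[OF _ lim0])
      show "\<forall>\<^sub>F n in sequentially. norm (fst (hs n) - fst x) \<le> inverse (real (Suc n))"
      proof (rule always_eventually, rule allI)
        fix n
        have "norm (fst (hs n) - fst x) \<le> dd r x (hs n)"
          by (simp add: dd_def norm_minus_commute sum_nonneg)
        then show "norm (fst (hs n) - fst x) \<le> inverse (real (Suc n))" using hs(2)[of n] by linarith
      qed
    qed
    then show ?thesis by (rule LIM_zero_cancel)
  qed
  have c2: "(\<lambda>n. snd (hs n) i) \<longlonglongrightarrow> snd x i" for i
  proof (cases "i < r")
    case True
    have "(\<lambda>n. snd (hs n) i - snd x i) \<longlonglongrightarrow> 0"
    proof (rule Lim_null_comparison[OF _ lim0])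
      show "\<forall>\<^sub>F n in sequentially. norm (snd (hs n) i - snd x i) \<le> inverse (real (Suc n))"
      proof (rule always_eventually, rule allI)
        fix n
        have "norm (snd (hs n) i - snd x i) \<le> (\<Sum>j<r. cmod (snd x j - snd (hs n) j))"
          using True by (subst norm_minus_commute) (rule member_le_sum, auto)
        then have "norm (snd (hs n) i - snd x i) \<le> dd r x (hs n)"
          unfolding dd_def by (smt (verit) norm_ge_zero)
        then show "norm (snd (hs n) i - snd x i) \<le> inverse (real (Suc n))" using hs(2)[of n] by linarith
      qed
    qed
    then show ?thesis by (rule LIM_zero_cancel)
  next
    case False
    then have "snd (hs n) i = snd x i" for n using hsG[of n] assms(2) by (simp add: GG_iff)
    then show ?thesis by simp
  qed
  have "(\<lambda>n. (fst (hs n), snd (hs n))) \<longlonglongrightarrow> (fst x, snd x)"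
    by (rule tendsto_Pair[OF c1 tendsto_fun_coord[OF c2]])
  then have "hs \<longlonglongrightarrow> x" by simp
  then have "x \<in> H" using closed_sequentially[OF csg_closed[OF assms(1)]] hs(1) by blast
  then show False using assms(3) by simp
qed



lemma geom_bound:
  assumes "cmod z = 1" "z \<noteq> 1"
  shows "cmod (\<Sum>j<M. z ^ j) \<le> 2 / cmod (1 - z)"
proof -
  have "(\<Sum>j<M. z ^ j) = (1 - z ^ M) / (1 - z)" using assms(2) by (simp add: sum_gp_strict)
  moreover have "cmod (1 - z ^ M) \<le> 2"
  proof -
    have "cmod (1 - z ^ M) \<le> cmod (1::complex) + cmod (z ^ M)" by (rule norm_triangle_ineq4)
    then show ?thesis using assms(1) by (simp add: norm_power)
  qed
  moreover have "cmod (1 - z) > 0" using assms(2) by simp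
  ultimately show ?thesis by (simp add: norm_divide divide_right_mono)
qed

lemma avg_step:
  assumes H: "closed_subgroup_TT r H"
    and inv: "\<forall>y\<in>GG r. \<forall>g\<in>H. f (gmul y g) = f y"
    and hH: "h \<in> H" and M: "M > 0"
    and approx: "\<forall>y\<in>GG r. \<bar>f y - Re (tp r F c y)\<bar> \<le> e"
  defines "c1 \<equiv> \<lambda>l. c l * (\<Sum>j<M. chf r l h ^ j) * complex_of_real (1 / real M)"
  shows "\<forall>y\<in>GG r. \<bar>f y - Re (tp r F c1 y)\<bar> \<le> e"
proof
  fix y assume y: "y \<in> GG r"
  have hG: "h \<in> GG r" using csg_sub[OF H] hH by blast
  have pj: "gpow h j \<in> H" for j by (rule csg_pow[OF H hH])
  have yj: "gmul y (gpow h j) \<in> GG r" for j using GG_gmul[OF y] pj csg_sub[OF H] by blast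
  have "tp r F c1 y = complex_of_real (1 / real M) * (\<Sum>j<M. tp r F c (gmul y (gpow h j)))"
  proof -
    have "(\<Sum>j<M. tp r F c (gmul y (gpow h j))) = (\<Sum>j<M. \<Sum>l\<in>F. c l * chf r l y * chf r l h ^ j)"
      by (simp add: tp_def chf_gmul chf_gpow mult.assoc)
    also have "\<dots> = (\<Sum>l\<in>F. \<Sum>j<M. c l * chf r l y * chf r l h ^ j)" by (rule sum.swap)
    also have "\<dots> = (\<Sum>l\<in>F. c l * chf r l y * (\<Sum>j<M. chf r l h ^ j))" by (simp add: sum_distrib_left)
    finally show ?thesis by (simp add: tp_def c1_def sum_distrib_left mult_ac)
  qed
  then have "Re (tp r F c1 y) = (1 / real M) * (\<Sum>j<M. Re (tp r F c (gmul y (gpow h j))))"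
    by (simp add: Re_sum)
  then have "f y - Re (tp r F c1 y) = (1 / real M) * (\<Sum>j<M. f (gmul y (gpow h j)) - Re (tp r F c (gmul y (gpow h j))))"
    using M inv y pj by (simp add: sum_subtractf field_simps)
  moreover have "\<bar>\<Sum>j<M. f (gmul y (gpow h j)) - Re (tp r F c (gmul y (gpow h j)))\<bar> \<le> real M * e"
  proof -
    have "\<bar>\<Sum>j<M. f (gmul y (gpow h j)) - Re (tp r F c (gmul y (gpow h j)))\<bar>
          \<le> (\<Sum>j<M. \<bar>f (gmul y (gpow h j)) - Re (tp r F c (gmul y (gpow h j)))\<bar>)" by (rule sum_abs)
    also have "\<dots> \<le> (\<Sum>j<M. e)" by (rule sum_mono) (use approx yj in blast)
    finally show ?thesis by simp
  qed
  ultimately show "\<bar>f y - Re (tp r F c1 y)\<bar> \<le> e"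
    using M by (simp add: pos_divide_le_eq mult.commute)
qed

lemma reduce:
  assumes H: "closed_subgroup_TT r H"
    and inv: "\<forall>y\<in>GG r. \<forall>g\<in>H. f (gmul y g) = f y"
  shows "finite F \<Longrightarrow> (\<forall>y\<in>GG r. \<bar>f y - Re (tp r F c y)\<bar> \<le> e) \<Longrightarrow> \<delta> > 0 \<Longrightarrow>
     \<exists>F' c'. finite F' \<and> (\<forall>l\<in>F'. \<forall>g\<in>H. chf r l g = 1) \<and> (\<forall>y\<in>GG r. \<bar>f y - Re (tp r F' c' y)\<bar> \<le> e + \<delta>)"
proof (induction F arbitrary: c e \<delta> rule: finite_psubset_induct)
  case (psubset F)
  show ?case
  proof (cases "\<forall>l\<in>F. \<forall>g\<in>H. chf r l g = 1")
    case True
    then show ?thesis using psubset.prems psubset.hyps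
      by (intro exI[of _ F] exI[of _ c]) (auto intro: order_trans)
  next
    case False
    then obtain l0 h where l0: "l0 \<in> F" and hH: "h \<in> H" and z1: "chf r l0 h \<noteq> 1" by blast
    have hG: "h \<in> GG r" using csg_sub[OF H] hH by blast
    define z where "z = chf r l0 h"
    have zn: "cmod z = 1" using chf_norm[OF hG] by (simp add: z_def)
    have z1': "z \<noteq> 1" using z1 by (simp add: z_def)
    have d1: "cmod (1 - z) > 0" using z1' by simp
    obtain M :: nat where M: "real M > 4 * cmod (c l0) / (cmod (1 - z) * \<delta>)"
      using reals_Archimedean2 by blast
    have M0: "M > 0"
    proof -
      have "4 * cmod (c l0) / (cmod (1 - z) * \<delta>) \<ge> 0" using d1 psubset.prems(2) by simp
      then show ?thesis using M by (cases M) auto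
    qed
    define c1 where "c1 = (\<lambda>l. c l * (\<Sum>j<M. chf r l h ^ j) * complex_of_real (1 / real M))"
    have A: "\<forall>y\<in>GG r. \<bar>f y - Re (tp r F c1 y)\<bar> \<le> e"
      unfolding c1_def by (rule avg_step[OF H inv hH M0 psubset.prems(1)])
    have small: "cmod (c1 l0) \<le> \<delta> / 2"
    proof -
      have "cmod (c1 l0) = cmod (c l0) * cmod (\<Sum>j<M. z ^ j) / real M"
        by (simp add: c1_def z_def norm_mult norm_divide)
      also have "\<dots> \<le> cmod (c l0) * (2 / cmod (1 - z)) / real M"
        by (intro divide_right_mono mult_left_mono geom_bound zn z1') auto
      also have "\<dots> \<le> \<delta> / 2"
      proof -
        have "4 * cmod (c l0) < real M * (cmod (1 - z) * \<delta>)"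
          using M d1 psubset.prems(2) by (simp add: field_simps)
        then show ?thesis using d1 M0 psubset.prems(2) by (simp add: field_simps)
      qed
      finally show ?thesis .
    qed
    have B: "\<forall>y\<in>GG r. \<bar>f y - Re (tp r (F - {l0}) c1 y)\<bar> \<le> e + \<delta> / 2"
    proof
      fix y assume y: "y \<in> GG r"
      have "tp r F c1 y = c1 l0 * chf r l0 y + tp r (F - {l0}) c1 y"
        unfolding tp_def using psubset.hyps l0 by (simp add: sum.remove)
      moreover have "\<bar>Re (c1 l0 * chf r l0 y)\<bar> \<le> \<delta> / 2"
      proof -
        have "\<bar>Re (c1 l0 * chf r l0 y)\<bar> \<le> cmod (c1 l0 * chf r l0 y)" by (rule abs_Re_le_cmod)
        also have "\<dots> = cmod (c1 l0)" using chf_norm[OF y] by (simp add: norm_mult)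
        finally show ?thesis using small by simp
      qed
      ultimately show "\<bar>f y - Re (tp r (F - {l0}) c1 y)\<bar> \<le> e + \<delta> / 2"
        using A y by (smt (verit) plus_complex.sel(1))
    qed
    have sub: "F - {l0} \<subset> F" using l0 by blast
    obtain F' c' where R: "finite F'" "\<forall>l\<in>F'. \<forall>g\<in>H. chf r l g = 1"
      "\<forall>y\<in>GG r. \<bar>f y - Re (tp r F' c' y)\<bar> \<le> (e + \<delta> / 2) + \<delta> / 2"
      using psubset.IH[OF sub, of c1 "e + \<delta>/2" "\<delta>/2"] B psubset.prems(2) psubset.hyps by auto
    show ?thesis using R by (intro exI[of _ F'] exI[of _ c']) auto
  qed
qed

theorem dual:
  assumes H: "closed_subgroup_TT r H" and x: "x \<in> GG r" "x \<notin> H"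
  shows "\<exists>l. (\<forall>g\<in>H. chf r l g = 1) \<and> chf r l x \<noteq> 1"
proof (rule ccontr)
  assume na: "\<not> ?thesis"
  then have allx: "\<And>l. (\<forall>g\<in>H. chf r l g = 1) \<Longrightarrow> chf r l x = 1" by blast
  define f where "f = fH r H"
  have ne: "H \<noteq> {}" using csg_one[OF H] by blast
  have fc: "continuous_on (GG r) f" unfolding f_def by (rule fH_cont[OF ne])
  have fx: "f x > 0" unfolding f_def by (rule fH_pos[OF H x])
  have f1: "f (1, tone) = 0" unfolding f_def by (rule fH_zero[OF csg_one[OF H]])
  have inv: "\<forall>y\<in>GG r. \<forall>g\<in>H. f (gmul y g) = f y" unfolding f_def using fH_inv[OF H] by blast
  define eps where "eps = f x / 8"
  have eps: "eps > 0" using fx by (simp add: eps_def)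
  obtain F c where F: "finite F" "\<forall>p\<in>GG r. \<bar>f p - Re (tp r F c p)\<bar> < eps"
    using SW[OF fc eps] by blast
  then have F2: "\<forall>p\<in>GG r. \<bar>f p - Re (tp r F c p)\<bar> \<le> eps" by (auto intro: less_imp_le)
  obtain F' c' where R: "finite F'" "\<forall>l\<in>F'. \<forall>g\<in>H. chf r l g = 1"
      "\<forall>y\<in>GG r. \<bar>f y - Re (tp r F' c' y)\<bar> \<le> eps + eps"
    using reduce[OF H inv F(1) F2 eps] by blast
  have eq: "tp r F' c' x = tp r F' c' (1, tone)"
    unfolding tp_def by (rule sum.cong) (use R(2) allx chf_one in auto)
  have "\<bar>f x - Re (tp r F' c' x)\<bar> \<le> eps + eps" using R(3) x(1) by blast
  moreover have "\<bar>f (1, tone) - Re (tp r F' c' (1, tone))\<bar> \<le> eps + eps" using R(3) GG_one by blast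
  moreover have "Re (tp r F' c' x) = Re (tp r F' c' (1, tone))" using eq by simp
  ultimately have "f x \<le> 4 * eps" using f1 by (simp add: abs_le_iff)
  then show False using fx by (simp add: eps_def)
qed



definition ell :: "nat \<Rightarrow> real \<Rightarrow> (nat \<Rightarrow> real) \<Rightarrow> real \<Rightarrow> complex \<times> (nat \<Rightarrow> complex)" where
  "ell r a b t = (exp (\<i> * of_real (t * a)), \<lambda>i. if i < r then exp (\<i> * of_real (t * b i)) else 1)"

lemma ell_G: "ell r a b t \<in> GG r"
  by (simp add: GG_iff ell_def norm_exp_i_times)

lemma chf_ell: "chf r l (ell r a b t) = exp (\<i> * of_real (t * (of_int (fst l) * a + (\<Sum>i<r. of_int (snd l i) * b i))))"
proof -
  have "(\<Prod>i<r. (if i < r then exp (\<i> * of_real (t * b i)) else 1) powi snd l i)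
      = (\<Prod>i<r. exp (\<i> * of_real (t * (of_int (snd l i) * b i))))"
    by (rule prod.cong) (auto simp: exp_power_int mult_ac)
  also have "\<dots> = exp (\<Sum>i<r. \<i> * of_real (t * (of_int (snd l i) * b i)))"
    by (simp add: exp_sum)
  finally have P: "(\<Prod>i<r. (if i < r then exp (\<i> * of_real (t * b i)) else 1) powi snd l i)
      = exp (\<Sum>i<r. \<i> * of_real (t * (of_int (snd l i) * b i)))" .
  have "chf r l (ell r a b t) = exp (\<i> * of_real (t * a)) powi fst l * exp (\<Sum>i<r. \<i> * of_real (t * (of_int (snd l i) * b i)))"
    using P by (simp add: chf_def chi_def ell_def)
  also have "\<dots> = exp (of_int (fst l) * (\<i> * of_real (t * a)) + (\<Sum>i<r. \<i> * of_real (t * (of_int (snd l i) * b i))))"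
    by (simp add: exp_power_int exp_add)
  also have "\<dots> = exp (\<i> * of_real (t * (of_int (fst l) * a + (\<Sum>i<r. of_int (snd l i) * b i))))"
    by (simp add: algebra_simps sum_distrib_left)
  finally show ?thesis .
qed

lemma mod_zero:
  assumes q: "q \<noteq> 0" and u: "u \<in> torusC r" and c: "chi r m k (q, u) = 1"
  shows "of_int m * ln (cmod q) + (\<Sum>i<r. of_int (k i) * ln (cmod (u i))) = 0"
proof -
  have u0: "i < r \<Longrightarrow> u i \<noteq> 0" for i using u by (simp add: torusC_def)
  have "cmod (chi r m k (q, u)) = cmod q powi m * (\<Prod>i<r. cmod (u i) powi k i)"
    by (simp add: chi_def norm_mult norm_power_int prod_norm[symmetric])
  also have "cmod q powi m = exp (of_int m * ln (cmod q))"
    using q by (metis exp_ln exp_power_int zero_less_norm_iff)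
  also have "(\<Prod>i<r. cmod (u i) powi k i) = (\<Prod>i<r. exp (of_int (k i) * ln (cmod (u i))))"
    by (rule prod.cong) (use u0 in \<open>auto simp: exp_power_int[symmetric]\<close>)
  also have "\<dots> = exp (\<Sum>i<r. of_int (k i) * ln (cmod (u i)))" by (simp add: exp_sum)
  finally have "exp (of_int m * ln (cmod q) + (\<Sum>i<r. of_int (k i) * ln (cmod (u i)))) = 1"
    using c by (simp add: exp_add)
  then show ?thesis by simp
qed

lemma GG_csg: "closed_subgroup_TT r (GG r)"
  unfolding closed_subgroup_TT_def
proof (intro conjI ballI)
  show "GG r \<subseteq> circle \<times> torus r" by (simp add: GG_def)
  show "(1, tone) \<in> GG r" by (rule GG_one)
  show "closed (GG r)" by (rule compact_imp_closed[OF compact_GG])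
  fix p p' assume "p \<in> GG r" "p' \<in> GG r"
  then show "(fst p / fst p', tmul (snd p) (tinv (snd p'))) \<in> GG r"
    by (auto simp: GG_iff tmul_def tinv_def norm_mult norm_divide norm_inverse)
qed

lemma exp_pi_not1: assumes "n \<noteq> (0::int)" shows "exp (of_int n * (\<i> * of_real (pi / of_int n))) \<noteq> 1"
proof -
  have "of_int n * (\<i> * of_real (pi / of_int n)) = \<i> * of_real pi" using assms by (simp add: field_simps)
  then show ?thesis by simp
qed

lemma GG_complexify:
  assumes q: "q \<noteq> 0" and u: "u \<in> torusC r"
  shows "(q, u) \<in> complexify r (GG r)"
proof -
 have "\<forall>m k. (\<forall>p\<in>GG r. chi r m k p = 1) \<longrightarrow> chi r m k (q, u) = 1"
 proof (intro allI impI)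
  fix m k assume triv: "\<forall>p\<in>GG r. chi r m k p = 1"
  have m0: "m = 0"
  proof (rule ccontr)
    assume "m \<noteq> 0"
    have "(exp (\<i> * of_real (pi / of_int m)), tone) \<in> GG r"
      by (simp add: GG_iff tone_def norm_exp_i_times)
    then have "chi r m k (exp (\<i> * of_real (pi / of_int m)), tone) = 1" using triv by blast
    then have "exp (of_int m * (\<i> * of_real (pi / of_int m))) = 1"
      by (simp add: chi_def tone_def exp_power_int)
    then show False using exp_pi_not1[OF \<open>m \<noteq> 0\<close>] by simp
  qed
  have k0: "k i = 0" if i: "i < r" for i
  proof (rule ccontr)
    assume "k i \<noteq> 0"
    define w where "w = exp (\<i> * of_real (pi / of_int (k i)))"
    have "(1, tone(i := w)) \<in> GG r" using i by (simp add: GG_iff tone_def w_def norm_exp_i_times)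
    then have "chi r m k (1, tone(i := w)) = 1" using triv by blast
    moreover have "chi r m k (1, tone(i := w)) = w powi k i"
    proof -
      have "(\<Prod>j<r. (tone(i := w)) j powi k j) = (\<Prod>j<r. if j = i then w powi k i else 1)"
        by (rule prod.cong) (auto simp: tone_def)
      also have "\<dots> = w powi k i" using i by (simp add: prod.delta)
      finally show ?thesis by (simp add: chi_def)
    qed
    ultimately have "exp (of_int (k i) * (\<i> * of_real (pi / of_int (k i)))) = 1"
      by (simp add: w_def exp_power_int)
    then show False using exp_pi_not1[OF \<open>k i \<noteq> 0\<close>] by simp
  qed
  have "(\<Prod>i<r. u i powi k i) = 1" by (rule prod.neutral) (use k0 in auto)
  then show "chi r m k (q, u) = 1" by (simp add: chi_def m0)
 qed
 then show ?thesis unfolding complexify_def using q u by blast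
qed

lemma Tqu_sub:
  assumes "q \<noteq> 0" "u \<in> torusC r"
  shows "Tqu r q u \<subseteq> GG r"
  unfolding Tqu_def using GG_csg GG_complexify[OF assms] by blast

lemma ell_Tqu:
  assumes q: "q \<noteq> 0" and u: "u \<in> torusC r"
  shows "ell r (ln (cmod q)) (\<lambda>i. ln (cmod (u i))) t \<in> Tqu r q u"
  unfolding Tqu_def
proof (rule InterI, clarify)
  fix H assume H: "closed_subgroup_TT r H" and qu: "(q, u) \<in> complexify r H"
  show "ell r (ln (cmod q)) (\<lambda>i. ln (cmod (u i))) t \<in> H"
  proof (rule ccontr)
    assume "ell r (ln (cmod q)) (\<lambda>i. ln (cmod (u i))) t \<notin> H"
    then obtain l where l: "\<forall>g\<in>H. chf r l g = 1" "chf r l (ell r (ln (cmod q)) (\<lambda>i. ln (cmod (u i))) t) \<noteq> 1"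
      using dual[OF H ell_G] by blast
    have "chi r (fst l) (snd l) (q, u) = 1"
      using qu l(1) unfolding complexify_def chf_def by blast
    then have "of_int (fst l) * ln (cmod q) + (\<Sum>i<r. of_int (snd l i) * ln (cmod (u i))) = 0"
      by (rule mod_zero[OF q u])
    then show False using l(2) by (simp add: chf_ell)
  qed
qed

lemma Tqu_surj:
  assumes q: "0 < cmod q" "cmod q < 1" and u: "u \<in> torusC r" and w: "w \<in> circle"
  shows "\<exists>p\<in>Tqu r q u. inverse (fst p) = w"
proof -
  define a where "a = ln (cmod q)"
  have a0: "a \<noteq> 0" using q by (simp add: a_def)
  define t where "t = - Arg w / a"
  have wn: "cmod w = 1" using w by (simp add: circle_def)
  have weq: "w = exp (\<i> * of_real (Arg w))"
    using Arg_eq[of w] wn by (metis mult_1 norm_zero of_real_1 zero_neq_one)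
  have "inverse (fst (ell r a (\<lambda>i. ln (cmod (u i))) t)) = exp (- (\<i> * of_real (t * a)))"
    by (simp add: ell_def exp_minus)
  also have "\<dots> = w" using a0 weq by (simp add: t_def)
  finally show ?thesis using ell_Tqu[of q u r t] q u unfolding a_def by (metis zero_less_norm_iff less_irrefl)
qed



lemma plus_istop: "istopology (\<lambda>U. U \<subseteq> insert None (Some ` topspace X) \<and> openin X {x. Some x \<in> U})"
  unfolding istopology_def
proof (rule conjI; intro allI impI)
  fix S T :: "'a option set"
  assume "S \<subseteq> insert None (Some ` topspace X) \<and> openin X {x. Some x \<in> S}"
    "T \<subseteq> insert None (Some ` topspace X) \<and> openin X {x. Some x \<in> T}"
  moreover have "{x. Some x \<in> S \<inter> T} = {x. Some x \<in> S} \<inter> {x. Some x \<in> T}" by auto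
  ultimately show "S \<inter> T \<subseteq> insert None (Some ` topspace X) \<and> openin X {x. Some x \<in> S \<inter> T}"
    by auto
next
  fix K :: "'a option set set"
  assume K: "\<forall>S\<in>K. S \<subseteq> insert None (Some ` topspace X) \<and> openin X {x. Some x \<in> S}"
  have "{x. Some x \<in> \<Union>K} = \<Union>((\<lambda>S. {x. Some x \<in> S}) ` K)" by auto
  moreover have "openin X (\<Union>((\<lambda>S. {x. Some x \<in> S}) ` K))" using K by (intro openin_Union) auto
  ultimately show "\<Union>K \<subseteq> insert None (Some ` topspace X) \<and> openin X {x. Some x \<in> \<Union>K}"
    using K by auto
qed

lemma openin_plus: "openin (plus_top X) U \<longleftrightarrow> U \<subseteq> insert None (Some ` topspace X) \<and> openin X {x. Some x \<in> U}"
  by (simp only: plus_top_def topology_inverse'[OF plus_istop])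

lemma topspace_plus: "topspace (plus_top X) = insert None (Some ` topspace X)"
proof -
  have "openin (plus_top X) (insert None (Some ` topspace X))"
  proof -
    have "{x. Some x \<in> insert None (Some ` topspace X)} = topspace X" by auto
    then show ?thesis by (simp add: openin_plus)
  qed
  then have "insert None (Some ` topspace X) \<subseteq> topspace (plus_top X)" by (rule openin_subset)
  moreover have "topspace (plus_top X) \<subseteq> insert None (Some ` topspace X)"
    using openin_topspace[of "plus_top X"] unfolding openin_plus by blast
  ultimately show ?thesis by blast
qed

lemma smash_proj_in: "p \<in> A \<times> B \<Longrightarrow> smash_proj a0 b0 p \<in> smash_carrier A a0 B b0"
  by (cases p) (auto simp: smash_proj_def smash_carrier_def)

lemma smash_istop: "istopology (\<lambda>U. U \<subseteq> smash_carrier (topspace A) a0 (topspace B) b0 \<and>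
      openin (prod_topology A B) {p \<in> topspace (prod_topology A B). smash_proj a0 b0 p \<in> U})"
  unfolding istopology_def
proof (rule conjI; intro allI impI)
  fix S T assume S: "S \<subseteq> smash_carrier (topspace A) a0 (topspace B) b0 \<and>
      openin (prod_topology A B) {p \<in> topspace (prod_topology A B). smash_proj a0 b0 p \<in> S}"
    and T: "T \<subseteq> smash_carrier (topspace A) a0 (topspace B) b0 \<and>
      openin (prod_topology A B) {p \<in> topspace (prod_topology A B). smash_proj a0 b0 p \<in> T}"
  have "{p \<in> topspace (prod_topology A B). smash_proj a0 b0 p \<in> S \<inter> T} =
        {p \<in> topspace (prod_topology A B). smash_proj a0 b0 p \<in> S} \<inter> {p \<in> topspace (prod_topology A B). smash_proj a0 b0 p \<in> T}"
    by auto
  then show "S \<inter> T \<subseteq> smash_carrier (topspace A) a0 (topspace B) b0 \<and>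
      openin (prod_topology A B) {p \<in> topspace (prod_topology A B). smash_proj a0 b0 p \<in> S \<inter> T}"
    using S T by auto
next
  fix K assume K: "\<forall>S\<in>K. S \<subseteq> smash_carrier (topspace A) a0 (topspace B) b0 \<and>
      openin (prod_topology A B) {p \<in> topspace (prod_topology A B). smash_proj a0 b0 p \<in> S}"
  have "{p \<in> topspace (prod_topology A B). smash_proj a0 b0 p \<in> \<Union>K} =
        \<Union>((\<lambda>S. {p \<in> topspace (prod_topology A B). smash_proj a0 b0 p \<in> S}) ` K)" by auto
  moreover have "openin (prod_topology A B) (\<Union>((\<lambda>S. {p \<in> topspace (prod_topology A B). smash_proj a0 b0 p \<in> S}) ` K))"
    using K by (intro openin_Union) auto
  ultimately show "\<Union>K \<subseteq> smash_carrier (topspace A) a0 (topspace B) b0 \<and>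
      openin (prod_topology A B) {p \<in> topspace (prod_topology A B). smash_proj a0 b0 p \<in> \<Union>K}"
    using K by auto
qed

lemma openin_smash: "openin (smash_top A a0 B b0) U \<longleftrightarrow> U \<subseteq> smash_carrier (topspace A) a0 (topspace B) b0 \<and>
      openin (prod_topology A B) {p \<in> topspace (prod_topology A B). smash_proj a0 b0 p \<in> U}"
  by (simp only: smash_top_def topology_inverse'[OF smash_istop])

lemma topspace_smash: "topspace (smash_top A a0 B b0) = smash_carrier (topspace A) a0 (topspace B) b0"
proof -
  have "{p \<in> topspace (prod_topology A B). smash_proj a0 b0 p \<in> smash_carrier (topspace A) a0 (topspace B) b0}
        = topspace (prod_topology A B)"
    using smash_proj_in[of _ "topspace A" "topspace B"] by fastforce
  then have "openin (smash_top A a0 B b0) (smash_carrier (topspace A) a0 (topspace B) b0)"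
    using openin_topspace[of "prod_topology A B"] by (simp add: openin_smash)
  then have "smash_carrier (topspace A) a0 (topspace B) b0 \<subseteq> topspace (smash_top A a0 B b0)" by (rule openin_subset)
  moreover have "topspace (smash_top A a0 B b0) \<subseteq> smash_carrier (topspace A) a0 (topspace B) b0"
    using openin_topspace[of "smash_top A a0 B b0"] unfolding openin_smash by blast
  ultimately show ?thesis by blast
qed

lemma cont_smash_proj: "continuous_map (prod_topology A B) (smash_top A a0 B b0) (smash_proj a0 b0)"
  unfolding continuous_map_def
proof (intro conjI allI impI)
  show "smash_proj a0 b0 \<in> topspace (prod_topology A B) \<rightarrow> topspace (smash_top A a0 B b0)"
    using smash_proj_in[of _ "topspace A" "topspace B"] by (auto simp: topspace_smash)
  fix U assume "openin (smash_top A a0 B b0) U"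
  then show "openin (prod_topology A B) {x \<in> topspace (prod_topology A B). smash_proj a0 b0 x \<in> U}"
    by (simp add: openin_smash)
qed

lemma cont_Some: "continuous_map X (plus_top X) Some"
  unfolding continuous_map_def
proof (intro conjI allI impI)
  show "Some \<in> topspace X \<rightarrow> topspace (plus_top X)" by (auto simp: topspace_plus)
  fix U assume U: "openin (plus_top X) U"
  then have "{x \<in> topspace X. Some x \<in> U} = {x. Some x \<in> U}" by (auto simp: openin_plus)
  then show "openin X {x \<in> topspace X. Some x \<in> U}" using U by (simp add: openin_plus)
qed

lemma loop_of_idem: "loop_of (loop_of f) = loop_of f"
  by (simp add: loop_of_def fun_eq_iff)

lemma loop_of_in: "s \<in> circle \<Longrightarrow> loop_of f s = f s"
  by (simp add: loop_of_def)

lemma loop_eqI: "g = loop_of g \<Longrightarrow> g' = loop_of g' \<Longrightarrow> (\<And>s. s \<in> circle \<Longrightarrow> g s = g' s) \<Longrightarrow> g = g'"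
  by (metis loop_of_def ext)

lemma loop_act_in: "s \<in> circle \<Longrightarrow> loop_act a p g s = a (snd p) (g (inverse (fst p) * s))"
  by (simp add: loop_act_def loop_of_def)

lemma circ_mul: "w \<in> circle \<Longrightarrow> s \<in> circle \<Longrightarrow> inverse w * s \<in> circle"
  by (simp add: circle_def norm_mult norm_inverse)



theorem mainTheorem18:
  fixes r :: nat and X :: "'a topology" and act :: "(nat \<Rightarrow> complex) \<Rightarrow> 'a \<Rightarrow> 'a"
    and q :: complex and u :: "nat \<Rightarrow> complex"
  assumes "finite_TCW r X act"
    and "0 < cmod q" and "cmod q < 1"
    and "u \<in> torusC r"
  shows "fixed_loops r (smash_top (top_of_set circle) 1 (plus_top X) None) (smash_plus_act act) q u
       = smash_loop_incl ` smash_carrier circle 1 (insert None (Some ` fixed_loops r X act q u)) None"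
proof -
  let ?S = "smash_top (top_of_set circle) 1 (plus_top X) None"
  let ?act' = "smash_plus_act act"
  let ?TQ = "Tqu r q u"
  let ?FL = "fixed_loops r X act q u"
  have q0: "q \<noteq> 0" using assms(2) by auto
  have sub: "?TQ \<subseteq> GG r" by (rule Tqu_sub[OF q0 assms(4)])
  have fstc: "fst p \<in> circle" if "p \<in> ?TQ" for p using sub that by (auto simp: GG_def)
  have surj: "\<exists>p\<in>?TQ. inverse (fst p) = w" if "w \<in> circle" for w
    using Tqu_surj[OF assms(2,3,4) that] by blast
  have one: "(1::complex) \<in> circle" by (simp add: circle_def)
  have topS: "topspace ?S = insert None (Some ` ((circle - {1}) \<times> Some ` topspace X))"
    by (auto simp: topspace_smash topspace_plus smash_carrier_def)
  have act_None: "?act' t None = None" for t by (simp add: smash_plus_act_def)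
  have act_Some: "?act' t (Some (z, Some x)) = Some (z, Some (act t x))" for t z x
    by (simp add: smash_plus_act_def)
  have la_loop: "loop_act a p g = loop_of (loop_act a p g)" for a p and g :: "complex \<Rightarrow> 'b"
    by (simp add: loop_act_def loop_of_idem)
  show ?thesis
  proof (intro equalityI subsetI)
    fix \<gamma> assume "\<gamma> \<in> fixed_loops r ?S ?act' q u"
    then have gc: "continuous_map (top_of_set circle) ?S \<gamma>" and gl: "\<gamma> = loop_of \<gamma>"
      and gf: "\<forall>p\<in>?TQ. loop_act ?act' p \<gamma> = \<gamma>"
      by (auto simp: fixed_loops_def loops_def)
    have gval: "\<gamma> s \<in> topspace ?S" if "s \<in> circle" for s
      using gc that unfolding continuous_map_def by auto
    have key: "\<exists>p\<in>?TQ. \<gamma> s = ?act' (snd p) (\<gamma> s')" if s: "s \<in> circle" and s': "s' \<in> circle" for s s'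
    proof -
      have "s' * inverse s \<in> circle" using s s' by (simp add: circle_def norm_mult norm_inverse)
      then obtain p where p: "p \<in> ?TQ" "inverse (fst p) = s' * inverse s" using surj by blast
      have s0: "s \<noteq> 0" using s by (auto simp: circle_def)
      have "\<gamma> s = loop_act ?act' p \<gamma> s" using gf p(1) by simp
      also have "\<dots> = ?act' (snd p) (\<gamma> (inverse (fst p) * s))" by (rule loop_act_in[OF s])
      also have "inverse (fst p) * s = s'" using p(2) s0 by simp
      finally show ?thesis using p(1) by blast
    qed
    have "\<gamma> 1 \<in> topspace ?S" by (rule gval[OF one])
    then consider (N) "\<gamma> 1 = None" | (S) z0 x0 where "\<gamma> 1 = Some (z0, Some x0)" "z0 \<in> circle - {1}" "x0 \<in> topspace X"
      unfolding topS by auto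
    then show "\<gamma> \<in> smash_loop_incl ` smash_carrier circle 1 (insert None (Some ` ?FL)) None"
    proof cases
      case N
      have "\<gamma> = smash_loop_incl None"
      proof (rule loop_eqI[OF gl])
        show "smash_loop_incl None = loop_of (smash_loop_incl None)"
          by (simp add: smash_loop_incl_def loop_of_idem)
        fix s assume s: "s \<in> circle"
        obtain t where "\<gamma> s = ?act' t (\<gamma> 1)" using key[OF s one] by blast
        then show "\<gamma> s = smash_loop_incl None s" using N s act_None by (simp add: smash_loop_incl_def loop_of_in)
      qed
      moreover have "None \<in> smash_carrier circle 1 (insert None (Some ` ?FL)) None"
        by (simp add: smash_carrier_def)
      ultimately show ?thesis by blast
    next
      case S
      define \<delta> where "\<delta> = loop_of (\<lambda>s. the (snd (the (\<gamma> s))))"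
      have gs: "\<gamma> s = Some (z0, Some (\<delta> s))" if s: "s \<in> circle" for s
      proof -
        obtain t where "\<gamma> s = ?act' t (\<gamma> 1)" using key[OF s one] by blast
        then have "\<gamma> s = Some (z0, Some (act t x0))" using S(1) act_Some by simp
        then show ?thesis using s by (simp add: \<delta>_def loop_of_in)
      qed
      have dval: "\<delta> s \<in> topspace X" if s: "s \<in> circle" for s
        using gval[OF s] gs[OF s] unfolding topS by auto
      have dl: "\<delta> = loop_of \<delta>" by (simp add: \<delta>_def loop_of_idem)
      have dc: "continuous_map (top_of_set circle) X \<delta>"
        unfolding continuous_map_def
      proof (intro conjI allI impI)
        show "\<delta> \<in> topspace (top_of_set circle) \<rightarrow> topspace X" using dval by auto
        fix V assume V: "openin X V"
        define U where "U = Some ` ((circle - {1}) \<times> Some ` V)"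
        have pre: "{p \<in> topspace (prod_topology (top_of_set circle) (plus_top X)). smash_proj 1 None p \<in> U}
                  = (circle - {1}) \<times> Some ` V"
          using openin_subset[OF V] by (auto simp: U_def smash_proj_def topspace_plus)
        have o1: "openin (top_of_set circle) (circle - {1})"
          unfolding openin_open by (rule exI[of _ "- {1}"]) auto
        have o2: "openin (plus_top X) (Some ` V)"
        proof -
          have "{x. Some x \<in> Some ` V} = V" by auto
          then show ?thesis using openin_subset[OF V] V by (auto simp: openin_plus)
        qed
        have "openin ?S U"
          unfolding openin_smash
        proof
          show "U \<subseteq> smash_carrier (topspace (top_of_set circle)) 1 (topspace (plus_top X)) None"
            using openin_subset[OF V] by (auto simp: U_def smash_carrier_def topspace_plus)
          show "openin (prod_topology (top_of_set circle) (plus_top X))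
             {p \<in> topspace (prod_topology (top_of_set circle) (plus_top X)). smash_proj 1 None p \<in> U}"
            unfolding pre using o1 o2 by (simp add: openin_prod_Times_iff)
        qed
        then have "openin (top_of_set circle) {s \<in> topspace (top_of_set circle). \<gamma> s \<in> U}"
          using gc unfolding continuous_map_def by blast
        moreover have "{s \<in> topspace (top_of_set circle). \<gamma> s \<in> U} = {s \<in> topspace (top_of_set circle). \<delta> s \<in> V}"
          using gs S(2) by (auto simp: U_def)
        ultimately show "openin (top_of_set circle) {s \<in> topspace (top_of_set circle). \<delta> s \<in> V}" by simp
      qed
      have df: "loop_act act p \<delta> = \<delta>" if p: "p \<in> ?TQ" for p
      proof (rule loop_eqI[OF la_loop dl])
        fix s assume s: "s \<in> circle"
        have s': "inverse (fst p) * s \<in> circle" by (rule circ_mul[OF fstc[OF p] s])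
        have "\<gamma> s = loop_act ?act' p \<gamma> s" using gf p by simp
        also have "\<dots> = ?act' (snd p) (\<gamma> (inverse (fst p) * s))" by (rule loop_act_in[OF s])
        also have "\<dots> = Some (z0, Some (act (snd p) (\<delta> (inverse (fst p) * s))))"
          using gs[OF s'] act_Some by simp
        finally show "loop_act act p \<delta> s = \<delta> s" using gs[OF s] loop_act_in[OF s] by simp
      qed
      have dFL: "\<delta> \<in> ?FL" using dc dl df by (auto simp: fixed_loops_def loops_def)
      have "\<gamma> = smash_loop_incl (Some (z0, Some \<delta>))"
      proof (rule loop_eqI[OF gl])
        show "smash_loop_incl (Some (z0, Some \<delta>)) = loop_of (smash_loop_incl (Some (z0, Some \<delta>)))"
          by (simp add: smash_loop_incl_def loop_of_idem)
        fix s assume s: "s \<in> circle"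
        show "\<gamma> s = smash_loop_incl (Some (z0, Some \<delta>)) s" using gs[OF s] s by (simp add: smash_loop_incl_def loop_of_in)
      qed
      moreover have "Some (z0, Some \<delta>) \<in> smash_carrier circle 1 (insert None (Some ` ?FL)) None"
        using S(2) dFL by (auto simp: smash_carrier_def)
      ultimately show ?thesis by blast
    qed
  next
    fix \<gamma> assume "\<gamma> \<in> smash_loop_incl ` smash_carrier circle 1 (insert None (Some ` ?FL)) None"
    then obtain e where e: "e \<in> smash_carrier circle 1 (insert None (Some ` ?FL)) None" "\<gamma> = smash_loop_incl e" by blast
    then consider (N) "e = None" | (S) z \<delta> where "e = Some (z, Some \<delta>)" "z \<in> circle - {1}" "\<delta> \<in> ?FL"
      unfolding smash_carrier_def by blast
    then show "\<gamma> \<in> fixed_loops r ?S ?act' q u"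
    proof cases
      case N
      have gN: "\<gamma> = loop_of (\<lambda>s. None)" using e(2) N by (simp add: smash_loop_incl_def)
      have "continuous_map (top_of_set circle) ?S (\<lambda>s. None)" by (simp add: topS)
      then have gc: "continuous_map (top_of_set circle) ?S \<gamma>"
        by (rule continuous_map_eq) (simp add: gN loop_of_in)
      have gl: "\<gamma> = loop_of \<gamma>" by (simp add: gN loop_of_idem)
      have gf: "loop_act ?act' p \<gamma> = \<gamma>" if p: "p \<in> ?TQ" for p
      proof (rule loop_eqI[OF la_loop gl])
        fix s assume s: "s \<in> circle"
        have s': "inverse (fst p) * s \<in> circle" by (rule circ_mul[OF fstc[OF p] s])
        have "loop_act ?act' p \<gamma> s = ?act' (snd p) (\<gamma> (inverse (fst p) * s))" by (rule loop_act_in[OF s])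
        then show "loop_act ?act' p \<gamma> s = \<gamma> s"
          using s s' act_None by (simp add: gN loop_of_in)
      qed
      show ?thesis using gc gl gf by (auto simp: fixed_loops_def loops_def)
    next
      case S
      from S(3) have dc: "continuous_map (top_of_set circle) X \<delta>" and dl: "\<delta> = loop_of \<delta>"
        and df: "\<forall>p\<in>?TQ. loop_act act p \<delta> = \<delta>"
        by (auto simp: fixed_loops_def loops_def)
      have gS: "\<gamma> = loop_of (\<lambda>s. Some (z, Some (\<delta> s)))" using e(2) S(1) by (simp add: smash_loop_incl_def)
      have zc: "z \<in> topspace (top_of_set circle)" using S(2) by simp
      have c1: "continuous_map (top_of_set circle) (prod_topology (top_of_set circle) (plus_top X)) (\<lambda>s. (z, Some (\<delta> s)))"
        by (rule continuous_map_pairedI) (use zc continuous_map_compose[OF dc cont_Some] in \<open>auto simp: o_def\<close>)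
      have "continuous_map (top_of_set circle) ?S (smash_proj 1 None \<circ> (\<lambda>s. (z, Some (\<delta> s))))"
        by (rule continuous_map_compose[OF c1 cont_smash_proj])
      then have gc: "continuous_map (top_of_set circle) ?S \<gamma>"
        by (rule continuous_map_eq) (use S(2) in \<open>auto simp: gS loop_of_in smash_proj_def\<close>)
      have gl: "\<gamma> = loop_of \<gamma>" by (simp add: gS loop_of_idem)
      have gf: "loop_act ?act' p \<gamma> = \<gamma>" if p: "p \<in> ?TQ" for p
      proof (rule loop_eqI[OF la_loop gl])
        fix s assume s: "s \<in> circle"
        have s': "inverse (fst p) * s \<in> circle" by (rule circ_mul[OF fstc[OF p] s])
        have "act (snd p) (\<delta> (inverse (fst p) * s)) = \<delta> s"
          using df p loop_act_in[OF s, of act p \<delta>] by simp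
        moreover have "loop_act ?act' p \<gamma> s = ?act' (snd p) (\<gamma> (inverse (fst p) * s))" by (rule loop_act_in[OF s])
        ultimately show "loop_act ?act' p \<gamma> s = \<gamma> s"
          using s s' act_Some by (simp add: gS loop_of_in)
      qed
      show ?thesis using gc gl gf by (auto simp: fixed_loops_def loops_def)
    qed
  qed
qed

end
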